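(* Let $n\ge 1$ and $1\le k\le d$ be integers, set $p=k/d$, and let $\mathbf{x}_1,\dots,\mathbf{x}_n\in\mathbb{R}^d$ with $\mathbf{x}_i=(x_{i1},\dots,x_{id})$. Each node $i$ independently chooses a uniformly random subset $S_i\subseteq\{1,\dots,d\}$ of size $k$, and sets $h_{ij}=x_{ij}$ if $j\in S_i$ and $h_{ij}=0$ otherwise. Let $M_j=|\{i:j\in S_i\}|$. Let $T:\{1,\dots,n\}\to\mathbb{R}\setminus\{0\}$ be such that $$\bar\beta=\Big(\sum_{m=1}^{n}\frac{k}{d\,T(m)}\binom{n-1}{m-1}p^{m-1}(1-p)^{n-m}\Big)^{-1}$$ is well defined. Define $\hat{\mathbf{x}}=(\hat x_1,\dots,\hat x_d)$ by $\hat{x}_j=\frac{1}{n}\frac{\bar\beta}{T(M_j)}\sum_{i=1}^n h_{ij}$ if $M_j\ge1$ and $\hat x_j=0$ if $M_j=0$, and let $\bar{\mathbf{x}}=\frac1n\sum_{i=1}^n\mathbf{x}_i$. Then $$\mathbb{E}\big[\|\hat{\mathbf{x}}-\bar{\mathbf{x}}\|_2^2\big]=\frac{1}{n^2}\Big(\frac{d}{k}-1\Big)R_1+\frac{1}{n^2}\big(c_1R_1-c_2R_2\big),$$ where $R_1=\sum_{i=1}^n\|\mathbf{x}_i\|_2^2$, $R_2=2\sum_{i=1}^n\sum_{l=i+1}^n\langle\mathbf{x}_i,\mathbf{x}_l\rangle$, $$c_1=\bar\beta^2\sum_{m=1}^{n}\frac{k}{d\,T(m)^2}\binom{n-1}{m-1}p^{m-1}(1-p)^{n-m}-\frac{d}{k},\qquad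 c_2=1-\bar\beta^2\sum_{m=2}^{n}\frac{k^2}{d^2T(m)^2}\binom{n-2}{m-2}p^{m-2}(1-p)^{n-m},$$ and the expectation is over the random subsets $S_1,\dots,S_n$.
   Context: This is the mean squared error of the Rand-$k$-Spatial family of estimators of $\bar{\mathbf{x}}$ from Rand-$k$ sparsified vectors; the choice $T\equiv1$ recovers the standard Rand-$k$ estimator $\frac{1}{n}\frac{d}{k}\sum_i\mathbf{h}_i$. *)

theory Defs
  imports "HOL-Probability.Probability"
begin

text \<open>Indices are 0-based: nodes i < n, coordinates j < d.
  Vectors are x :: nat \<Rightarrow> nat \<Rightarrow> real, x i j = j-th coordinate of node i.\<close>

definition ksubsets :: "nat \<Rightarrow> nat \<Rightarrow> nat set set" where
  "ksubsets d k = {A. A \<subseteq> {..<d} \<and> card A = k}"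

definition subsets_pmf :: "nat \<Rightarrow> nat \<Rightarrow> nat \<Rightarrow> (nat \<Rightarrow> nat set) pmf" where
  "subsets_pmf n d k = Pi_pmf {..<n} {} (\<lambda>_. pmf_of_set (ksubsets d k))"

definition Mcount :: "nat \<Rightarrow> (nat \<Rightarrow> nat set) \<Rightarrow> nat \<Rightarrow> nat" where
  "Mcount n S j = card {i \<in> {..<n}. j \<in> S i}"

definition hval :: "(nat \<Rightarrow> nat \<Rightarrow> real) \<Rightarrow> (nat \<Rightarrow> nat set) \<Rightarrow> nat \<Rightarrow> nat \<Rightarrow> real" where
  "hval x S i j = (if j \<in> S i then x i j else 0)"

definition beta_bar :: "nat \<Rightarrow> nat \<Rightarrow> nat \<Rightarrow> (nat \<Rightarrow> real) \<Rightarrow> real" where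
  "beta_bar n d k T = inverse (\<Sum>m=1..n. real k / (real d * T m) * real ((n-1) choose (m-1))
       * (real k / real d) ^ (m-1) * (1 - real k / real d) ^ (n-m))"

definition xhat :: "nat \<Rightarrow> nat \<Rightarrow> nat \<Rightarrow> (nat \<Rightarrow> real) \<Rightarrow> (nat \<Rightarrow> nat \<Rightarrow> real)
     \<Rightarrow> (nat \<Rightarrow> nat set) \<Rightarrow> nat \<Rightarrow> real" where
  "xhat n d k T x S j = (if Mcount n S j \<ge> 1
      then (1 / real n) * (beta_bar n d k T / T (Mcount n S j)) * (\<Sum>i<n. hval x S i j)
      else 0)"

definition xbar :: "nat \<Rightarrow> (nat \<Rightarrow> nat \<Rightarrow> real) \<Rightarrow> nat \<Rightarrow> real" where
  "xbar n x j = (1 / real n) * (\<Sum>i<n. x i j)"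

definition R1 :: "nat \<Rightarrow> nat \<Rightarrow> (nat \<Rightarrow> nat \<Rightarrow> real) \<Rightarrow> real" where
  "R1 n d x = (\<Sum>i<n. \<Sum>j<d. (x i j)^2)"

definition R2 :: "nat \<Rightarrow> nat \<Rightarrow> (nat \<Rightarrow> nat \<Rightarrow> real) \<Rightarrow> real" where
  "R2 n d x = 2 * (\<Sum>i<n. \<Sum>l\<in>{i+1..<n}. \<Sum>j<d. x i j * x l j)"

definition c1 :: "nat \<Rightarrow> nat \<Rightarrow> nat \<Rightarrow> (nat \<Rightarrow> real) \<Rightarrow> real" where
  "c1 n d k T = (beta_bar n d k T)^2 * (\<Sum>m=1..n. real k / (real d * (T m)^2)
       * real ((n-1) choose (m-1)) * (real k / real d) ^ (m-1) * (1 - real k / real d) ^ (n-m))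
     - real d / real k"

definition c2 :: "nat \<Rightarrow> nat \<Rightarrow> nat \<Rightarrow> (nat \<Rightarrow> real) \<Rightarrow> real" where
  "c2 n d k T = 1 - (beta_bar n d k T)^2 * (\<Sum>m=2..n. (real k)^2 / ((real d)^2 * (T m)^2)
       * real ((n-2) choose (m-2)) * (real k / real d) ^ (m-2) * (1 - real k / real d) ^ (n-m))"

end

theory Submission
  imports Defs
begin


lemma pair_expect:
  fixes F :: "'a \<times> 'b \<Rightarrow> real"
  assumes "finite (set_pmf P)" "finite (set_pmf Q)"
  shows "measure_pmf.expectation (pair_pmf P Q) F
       = measure_pmf.expectation P (\<lambda>a. measure_pmf.expectation Q (\<lambda>b. F (a,b)))"
proof -
  have "measure_pmf.expectation (pair_pmf P Q) F = (\<Sum>z\<in>set_pmf P \<times> set_pmf Q. F z * pmf (pair_pmf P Q) z)"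
    by (rule integral_measure_pmf_real) (use assms in auto)
  also have "\<dots> = (\<Sum>a\<in>set_pmf P. \<Sum>b\<in>set_pmf Q. F (a,b) * (pmf P a * pmf Q b))"
    by (auto simp: sum.cartesian_product pmf_pair intro!: sum.cong)
  also have "\<dots> = (\<Sum>a\<in>set_pmf P. (\<Sum>b\<in>set_pmf Q. F (a,b) * pmf Q b) * pmf P a)"
    by (simp add: sum_distrib_right sum_distrib_left mult_ac)
  also have "\<dots> = measure_pmf.expectation P (\<lambda>a. measure_pmf.expectation Q (\<lambda>b. F (a,b)))"
    by (subst integral_measure_pmf_real[where A="set_pmf P"]) 
       (use assms in \<open>auto intro!: sum.cong simp: integral_measure_pmf_real[where A="set_pmf Q"]\<close>)
  finally show ?thesis .
qed

lemma finite_set_Pi_bern: "finite A \<Longrightarrow> finite (set_pmf (Pi_pmf A False (\<lambda>_. bernoulli_pmf p)))"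
  by (subst set_Pi_pmf) auto

lemma Pi_step:
  fixes h :: "('a \<Rightarrow> bool) \<Rightarrow> real"
  assumes "finite A" "i \<notin> A" "0 \<le> p" "p \<le> 1"
  shows "measure_pmf.expectation (Pi_pmf (insert i A) False (\<lambda>_. bernoulli_pmf p)) h
    = p * measure_pmf.expectation (Pi_pmf A False (\<lambda>_. bernoulli_pmf p)) (\<lambda>f. h (f(i:=True)))
    + (1-p) * measure_pmf.expectation (Pi_pmf A False (\<lambda>_. bernoulli_pmf p)) (\<lambda>f. h (f(i:=False)))"
proof -
  have "measure_pmf.expectation (Pi_pmf (insert i A) False (\<lambda>_. bernoulli_pmf p)) h
     = measure_pmf.expectation (pair_pmf (bernoulli_pmf p) (Pi_pmf A False (\<lambda>_. bernoulli_pmf p))) (\<lambda>(y,f). h (f(i:=y)))"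
    by (simp add: Pi_pmf_insert[OF assms(1,2)] case_prod_unfold)
  also have "\<dots> = measure_pmf.expectation (bernoulli_pmf p) (\<lambda>y. measure_pmf.expectation (Pi_pmf A False (\<lambda>_. bernoulli_pmf p)) (\<lambda>f. h (f(i:=y))))"
  proof -
    have f1: "finite (set_pmf (bernoulli_pmf p))" by (rule finite_subset[of _ UNIV]) auto
    have f2: "finite (set_pmf (Pi_pmf A False (\<lambda>_. bernoulli_pmf p)))" using assms finite_set_Pi_bern by auto
    show ?thesis using pair_expect[OF f1 f2, of "\<lambda>(y,f). h (f(i:=y))"] by simp
  qed
  also have "\<dots> = p * measure_pmf.expectation (Pi_pmf A False (\<lambda>_. bernoulli_pmf p)) (\<lambda>f. h (f(i:=True)))
    + (1-p) * measure_pmf.expectation (Pi_pmf A False (\<lambda>_. bernoulli_pmf p)) (\<lambda>f. h (f(i:=False)))"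
    using assms by (simp add: mult_ac)
  finally show ?thesis .
qed

lemma binom_expect:
  fixes g :: "nat \<Rightarrow> real"
  assumes "finite A" "0 \<le> p" "p \<le> 1"
  shows "measure_pmf.expectation (Pi_pmf A False (\<lambda>_. bernoulli_pmf p)) (\<lambda>f. g (card {x\<in>A. f x}))
    = (\<Sum>m\<le>card A. real (card A choose m) * p ^ m * (1 - p) ^ (card A - m) * g m)"
proof -
  have "binomial_pmf (card A) p = map_pmf (\<lambda>f. card {x\<in>A. f x}) (Pi_pmf A False (\<lambda>_. bernoulli_pmf p))"
    by (rule binomial_pmf_altdef') (use assms in auto)
  hence "measure_pmf.expectation (Pi_pmf A False (\<lambda>_. bernoulli_pmf p)) (\<lambda>f. g (card {x\<in>A. f x}))
     = measure_pmf.expectation (binomial_pmf (card A) p) g" by simp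
  also have "\<dots> = (\<Sum>m\<le>card A. real (card A choose m) * p ^ m * (1 - p) ^ (card A - m) * g m)" by (subst expectation_binomial_pmf') (use assms in auto)
  finally show ?thesis .
qed

lemma lemA:
  fixes g :: "nat \<Rightarrow> real"
  assumes "finite I" "i \<in> I" "0 \<le> p" "p \<le> 1"
  shows "measure_pmf.expectation (Pi_pmf I False (\<lambda>_. bernoulli_pmf p))
          (\<lambda>f. if f i then g (card {x\<in>I. f x}) else 0)
    = p * (\<Sum>m\<le>card I - 1. real ((card I - 1) choose m) * p ^ m * (1 - p) ^ (card I - 1 - m) * g (Suc m))"
proof -
  define A where "A = I - {i}"
  have Ieq: "I = insert i A" and Inot: "i \<notin> A" and Afin: "finite A" and Acard: "card A = card I - 1"
    using assms by (auto simp: A_def)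
  have c: "card {x \<in> insert i A. (f(i:=True)) x} = Suc (card {x\<in>A. f x})" for f
  proof -
    have "{x \<in> insert i A. (f(i:=True)) x} = insert i {x\<in>A. f x}" using Inot by auto
    thus ?thesis using Inot Afin by simp
  qed
  have "measure_pmf.expectation (Pi_pmf (insert i A) False (\<lambda>_. bernoulli_pmf p))
          (\<lambda>f. if f i then g (card {x\<in>insert i A. f x}) else 0)
    = p * measure_pmf.expectation (Pi_pmf A False (\<lambda>_. bernoulli_pmf p)) (\<lambda>f. g (Suc (card {x\<in>A. f x})))"
  proof -
    have e1: "(\<lambda>f. if (f(i:=True)) i then g (card {x\<in>insert i A. (f(i:=True)) x}) else 0)
           = (\<lambda>f. g (Suc (card {x\<in>A. f x})))" by (simp only: c fun_upd_same if_True)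
    have e2: "(\<lambda>f. if (f(i:=False)) i then g (card {x\<in>insert i A. (f(i:=False)) x}) else 0)
           = (\<lambda>f. 0)" by simp
    show ?thesis by (subst Pi_step[OF Afin Inot assms(3,4)]) (simp only: e1 e2, simp)
  qed
  also have "\<dots> = p * (\<Sum>m\<le>card I - 1. real ((card I - 1) choose m) * p ^ m * (1 - p) ^ (card I - 1 - m) * g (Suc m))"
    using binom_expect[where g="\<lambda>m. g (Suc m)", of A p] Afin Acard assms by simp
  finally have X: "measure_pmf.expectation (Pi_pmf (insert i A) False (\<lambda>_. bernoulli_pmf p))
          (\<lambda>f. if f i then g (card {x\<in>insert i A. f x}) else 0)
    = p * (\<Sum>m\<le>card I - 1. real ((card I - 1) choose m) * p ^ m * (1 - p) ^ (card I - 1 - m) * g (Suc m))" .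
  show ?thesis using X[folded Ieq] .
qed

lemma lemB:
  fixes g :: "nat \<Rightarrow> real"
  assumes "finite I" "i \<in> I" "l \<in> I" "i \<noteq> l" "0 \<le> p" "p \<le> 1"
  shows "measure_pmf.expectation (Pi_pmf I False (\<lambda>_. bernoulli_pmf p))
          (\<lambda>f. if f i \<and> f l then g (card {x\<in>I. f x}) else 0)
    = p^2 * (\<Sum>m\<le>card I - 2. real ((card I - 2) choose m) * p ^ m * (1 - p) ^ (card I - 2 - m) * g (Suc (Suc m)))"
proof -
  define A where "A = I - {i, l}"
  have Ieq: "I = insert i (insert l A)" and Inot: "i \<notin> insert l A" and Lnot: "l \<notin> A"
    and Afin: "finite A" and Acard: "card A = card I - 2"
    using assms by (auto simp: A_def card_Diff_subset)
  have c: "card {x \<in> insert i (insert l A). ((f(l:=True))(i:=True)) x} = Suc (Suc (card {x\<in>A. f x}))" for f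
  proof -
    have "{x \<in> insert i (insert l A). ((f(l:=True))(i:=True)) x} = insert i (insert l {x\<in>A. f x})" by auto
    thus ?thesis using Inot Lnot Afin by simp
  qed
  have "measure_pmf.expectation (Pi_pmf (insert i (insert l A)) False (\<lambda>_. bernoulli_pmf p))
          (\<lambda>f. if f i \<and> f l then g (card {x\<in>insert i (insert l A). f x}) else 0)
    = p * measure_pmf.expectation (Pi_pmf (insert l A) False (\<lambda>_. bernoulli_pmf p))
          (\<lambda>f. if f l then g (card {x\<in>insert i (insert l A). (f(i:=True)) x}) else 0)"
  proof -
    have e1: "(\<lambda>f. if (f(i:=True)) i \<and> (f(i:=True)) l then g (card {x\<in>insert i (insert l A). (f(i:=True)) x}) else 0)
           = (\<lambda>f. if f l then g (card {x\<in>insert i (insert l A). (f(i:=True)) x}) else 0)"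
      using assms(4) by (simp only: fun_upd_same fun_upd_other[OF not_sym[OF assms(4)]] simp_thms)
    have e2: "(\<lambda>f. if (f(i:=False)) i \<and> (f(i:=False)) l then g (card {x\<in>insert i (insert l A). (f(i:=False)) x}) else 0)
           = (\<lambda>f. 0)" by simp
    have Lfin: "finite (insert l A)" using Afin by simp
    show ?thesis by (subst Pi_step[OF Lfin Inot assms(5,6)]) (simp only: e1 e2, simp)
  qed
  also have "\<dots> = p * (p * measure_pmf.expectation (Pi_pmf A False (\<lambda>_. bernoulli_pmf p)) (\<lambda>f. g (Suc (Suc (card {x\<in>A. f x})))))"
  proof -
    have e1: "(\<lambda>f. if (f(l:=True)) l then g (card {x\<in>insert i (insert l A). ((f(l:=True))(i:=True)) x}) else 0)
           = (\<lambda>f. g (Suc (Suc (card {x\<in>A. f x}))))" by (simp only: c fun_upd_same if_True)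
    have e2: "(\<lambda>f. if (f(l:=False)) l then g (card {x\<in>insert i (insert l A). ((f(l:=False))(i:=True)) x}) else 0)
           = (\<lambda>f. 0)" by simp
    show ?thesis by (subst Pi_step[OF Afin Lnot assms(5,6)]) (simp only: e1 e2, simp)
  qed
  also have "\<dots> = p^2 * (\<Sum>m\<le>card I - 2. real ((card I - 2) choose m) * p ^ m * (1 - p) ^ (card I - 2 - m) * g (Suc (Suc m)))"
    using binom_expect[where g="\<lambda>m. g (Suc (Suc m))", of A p] Afin Acard assms by (simp add: power2_eq_square)
  finally have X: "measure_pmf.expectation (Pi_pmf (insert i (insert l A)) False (\<lambda>_. bernoulli_pmf p))
          (\<lambda>f. if f i \<and> f l then g (card {x\<in>insert i (insert l A). f x}) else 0)
    = p^2 * (\<Sum>m\<le>card I - 2. real ((card I - 2) choose m) * p ^ m * (1 - p) ^ (card I - 2 - m) * g (Suc (Suc m)))" .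
  show ?thesis using X[folded Ieq] .
qed

lemma coord:
  fixes n :: nat and w :: "nat \<Rightarrow> real" and T :: "nat \<Rightarrow> real" and p c xb :: real
  assumes p: "0 \<le> p" "p \<le> 1"
  defines "S1 \<equiv> (\<Sum>m\<le>n - 1. real ((n - 1) choose m) * p ^ m * (1 - p) ^ (n - 1 - m) * (1 / T (Suc m)))"
      and "S2 \<equiv> (\<Sum>m\<le>n - 1. real ((n - 1) choose m) * p ^ m * (1 - p) ^ (n - 1 - m) * (1 / T (Suc m)^2))"
      and "S3 \<equiv> (\<Sum>m\<le>n - 2. real ((n - 2) choose m) * p ^ m * (1 - p) ^ (n - 2 - m) * (1 / T (Suc (Suc m))^2))"
  shows "measure_pmf.expectation (Pi_pmf {..<n} False (\<lambda>_. bernoulli_pmf p))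
     (\<lambda>f. ((\<Sum>i<n. if f i then c * w i / T (card {i\<in>{..<n}. f i}) else 0) - xb)^2)
   = c^2 * p^2 * S3 * (\<Sum>i<n. w i)^2 + c^2 * (p * S2 - p^2 * S3) * (\<Sum>i<n. (w i)^2)
     - 2 * xb * c * p * S1 * (\<Sum>i<n. w i) + xb^2"
proof -
  define P where "P = Pi_pmf {..<n} False (\<lambda>_. bernoulli_pmf p)"
  define N where "N = (\<lambda>f. card {i\<in>{..<n}. f i})"
  define V where "V = (\<lambda>i f. if f i then c * w i / T (N f) else 0)"
  define U where "U = (\<lambda>i l f. if f i \<and> f l then c^2 * w i * w l * (1 / T (N f)^2) else 0)"
  have fin: "finite (set_pmf P)" unfolding P_def by (rule finite_set_Pi_bern) simp
  have int: "integrable (measure_pmf P) h" for h :: "_ \<Rightarrow> real" by (rule integrable_measure_pmf_finite[OF fin])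
  have expand: "(\<lambda>f. ((\<Sum>i<n. if f i then c * w i / T (card {i\<in>{..<n}. f i}) else 0) - xb)^2)
     = (\<lambda>f. (\<Sum>i<n. \<Sum>l<n. U i l f) - 2 * xb * (\<Sum>i<n. V i f) + xb^2)"
  proof
    fix f
    have "(\<Sum>i<n. V i f)^2 = (\<Sum>i<n. \<Sum>l<n. V i f * V l f)"
      by (simp add: power2_eq_square sum_product)
    also have "\<dots> = (\<Sum>i<n. \<Sum>l<n. U i l f)"
      by (intro sum.cong refl) (simp add: U_def V_def power2_eq_square)
    finally have "(\<Sum>i<n. V i f)^2 = (\<Sum>i<n. \<Sum>l<n. U i l f)" .
    thus "((\<Sum>i<n. if f i then c * w i / T (card {i\<in>{..<n}. f i}) else 0) - xb)^2
      = (\<Sum>i<n. \<Sum>l<n. U i l f) - 2 * xb * (\<Sum>i<n. V i f) + xb^2"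
      unfolding V_def N_def by (simp add: power2_diff)
  qed
  have EV: "measure_pmf.expectation P (V i) = c * w i * p * S1" if "i < n" for i
  proof -
    have "measure_pmf.expectation P (V i) = measure_pmf.expectation P
         (\<lambda>f. if f i then (\<lambda>m. (c * w i) * (1 / T m)) (card {x\<in>{..<n}. f x}) else 0)"
      unfolding V_def N_def by (intro arg_cong[where f="measure_pmf.expectation P"] ext) simp
    also have "\<dots> = c * w i * p * S1" unfolding P_def S1_def
      by (subst lemA) (use that p in \<open>simp_all add: sum_distrib_left mult_ac\<close>)
    finally show ?thesis .
  qed
  have EU: "measure_pmf.expectation P (U i l) = c^2 * w i * w l * (p^2 * S3)
       + (if i = l then c^2 * (w i)^2 * (p * S2 - p^2 * S3) else 0)" if "i < n" "l < n" for i l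
  proof (cases "i = l")
    case True
    have "measure_pmf.expectation P (U i l) = measure_pmf.expectation P
         (\<lambda>f. if f i then (\<lambda>m. (c^2 * w i * w i) * (1 / T m ^ 2)) (card {x\<in>{..<n}. f x}) else 0)"
      unfolding U_def N_def True by (intro arg_cong[where f="measure_pmf.expectation P"] ext) simp
    also have "\<dots> = c^2 * w i * w i * p * S2" unfolding P_def S2_def
      by (subst lemA) (use that p in \<open>simp_all add: sum_distrib_left mult_ac\<close>)
    finally show ?thesis using True by (simp add: algebra_simps power2_eq_square)
  next
    case False
    have "measure_pmf.expectation P (U i l) = measure_pmf.expectation P
         (\<lambda>f. if f i \<and> f l then (\<lambda>m. (c^2 * w i * w l) * (1 / T m ^ 2)) (card {x\<in>{..<n}. f x}) else 0)"
      unfolding U_def N_def by (intro arg_cong[where f="measure_pmf.expectation P"] ext) simp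
    also have "\<dots> = c^2 * w i * w l * (p^2 * S3)" unfolding P_def S3_def
      by (subst lemB) (use that p False in \<open>simp_all add: sum_distrib_left mult_ac\<close>)
    finally show ?thesis using False by simp
  qed
  have "measure_pmf.expectation P (\<lambda>f. (\<Sum>i<n. \<Sum>l<n. U i l f) - 2 * xb * (\<Sum>i<n. V i f) + xb^2)
      = (\<Sum>i<n. \<Sum>l<n. measure_pmf.expectation P (U i l)) - 2 * xb * (\<Sum>i<n. measure_pmf.expectation P (V i)) + xb^2"
    by (simp add: int Bochner_Integration.integral_sum)
  also have "\<dots> = (\<Sum>i<n. \<Sum>l<n. c^2 * w i * w l * (p^2 * S3)
       + (if i = l then c^2 * (w i)^2 * (p * S2 - p^2 * S3) else 0)) - 2 * xb * (\<Sum>i<n. c * w i * p * S1) + xb^2"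
    by (simp add: EU EV)
  also have "\<dots> = c^2 * p^2 * S3 * (\<Sum>i<n. w i)^2 + c^2 * (p * S2 - p^2 * S3) * (\<Sum>i<n. (w i)^2)
     - 2 * xb * c * p * S1 * (\<Sum>i<n. w i) + xb^2"
    by (simp add: sum.distrib sum_distrib_left sum_distrib_right power2_eq_square sum_product mult_ac)
  finally show ?thesis unfolding P_def expand .
qed

lemma sq_sum: "(\<Sum>i<n. a i)^2 = (\<Sum>i<n. (a i)^2) + 2 * (\<Sum>i<n. \<Sum>l\<in>{i+1..<n}. a i * a l)"
  for a :: "nat \<Rightarrow> real"
proof (induction n)
  case 0
  then show ?case by simp
next
  case (Suc n)
  have "(\<Sum>i<Suc n. \<Sum>l\<in>{i+1..<Suc n}. a i * a l) = (\<Sum>i<n. \<Sum>l\<in>{i+1..<Suc n}. a i * a l)"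
    by simp
  also have "\<dots> = (\<Sum>i<n. (\<Sum>l\<in>{i+1..<n}. a i * a l) + a i * a n)"
    by (intro sum.cong refl) (simp add: sum.atLeastLessThan_Suc)
  also have "\<dots> = (\<Sum>i<n. \<Sum>l\<in>{i+1..<n}. a i * a l) + a n * (\<Sum>i<n. a i)"
    by (simp add: sum.distrib sum_distrib_left mult_ac)
  finally have e: "(\<Sum>i<Suc n. \<Sum>l\<in>{i+1..<Suc n}. a i * a l) = (\<Sum>i<n. \<Sum>l\<in>{i+1..<n}. a i * a l) + a n * (\<Sum>i<n. a i)" .
  show ?case unfolding e using Suc.IH by (simp add: power2_sum algebra_simps)
qed

lemma ksub_finite: "finite (ksubsets d k)"
  unfolding ksubsets_def by (rule finite_subset[of _ "Pow {..<d}"]) auto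

lemma ksub_nonempty: "k \<le> d \<Longrightarrow> ksubsets d k \<noteq> {}"
  unfolding ksubsets_def by (rule ccontr) (auto dest: spec[of _ "{..<k}"])

lemma ksub_card: "card (ksubsets d k) = d choose k"
  unfolding ksubsets_def using n_subsets[of "{..<d}" k] by simp

lemma ksub_card_j:
  assumes "j < d" "1 \<le> k"
  shows "card (ksubsets d k \<inter> {A. j \<in> A}) = (d - 1) choose (k - 1)"
proof -
  have eq: "ksubsets d k \<inter> {A. j \<in> A} = insert j ` {B. B \<subseteq> {..<d} - {j} \<and> card B = k - 1}"
  proof (intro equalityI subsetI)
    fix A assume "A \<in> ksubsets d k \<inter> {A. j \<in> A}"
    hence A: "A \<subseteq> {..<d}" "card A = k" "j \<in> A" by (auto simp: ksubsets_def)
    have fA: "finite A" using A(1) finite_subset by blast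
    have "A = insert j (A - {j})" using A by auto
    moreover have "A - {j} \<in> {B. B \<subseteq> {..<d} - {j} \<and> card B = k - 1}" using A fA by auto
    ultimately show "A \<in> insert j ` {B. B \<subseteq> {..<d} - {j} \<and> card B = k - 1}" by blast
  next
    fix A assume "A \<in> insert j ` {B. B \<subseteq> {..<d} - {j} \<and> card B = k - 1}"
    then obtain B where B: "A = insert j B" "B \<subseteq> {..<d} - {j}" "card B = k - 1" by auto
    have fB: "finite B" using B(2) finite_subset by blast
    have "j \<notin> B" using B by auto
    hence "card A = k" using B fB assms by simp
    thus "A \<in> ksubsets d k \<inter> {A. j \<in> A}" using B assms by (auto simp: ksubsets_def)
  qed
  have inj: "inj_on (insert j) {B. B \<subseteq> {..<d} - {j} \<and> card B = k - 1}"
    unfolding inj_on_def by blast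
  have "card (ksubsets d k \<inter> {A. j \<in> A}) = card {B. B \<subseteq> {..<d} - {j} \<and> card B = k - 1}"
    unfolding eq by (rule card_image[OF inj])
  also have "\<dots> = card ({..<d} - {j}) choose (k - 1)" by (rule n_subsets) simp
  also have "card ({..<d} - {j}) = d - 1" using assms by simp
  finally show ?thesis .
qed

lemma bern_marg:
  assumes "1 \<le> k" "k \<le> d" "j < d"
  shows "map_pmf (\<lambda>A. j \<in> A) (pmf_of_set (ksubsets d k)) = bernoulli_pmf (real k / real d)"
proof -
  have p: "0 \<le> real k / real d" "real k / real d \<le> 1" using assms by auto
  have T: "pmf (map_pmf (\<lambda>A. j \<in> A) (pmf_of_set (ksubsets d k))) True = real k / real d"
  proof -
    have "pmf (map_pmf (\<lambda>A. j \<in> A) (pmf_of_set (ksubsets d k))) True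
        = measure (pmf_of_set (ksubsets d k)) {A. j \<in> A}"
      by (simp add: pmf_map vimage_def)
    also have "\<dots> = real (card (ksubsets d k \<inter> {A. j \<in> A})) / real (card (ksubsets d k))"
      by (rule measure_pmf_of_set) (use assms ksub_nonempty ksub_finite in auto)
    also have "\<dots> = real ((d - 1) choose (k - 1)) / real (d choose k)"
      using assms by (simp add: ksub_card_j ksub_card)
    also have "\<dots> = real k / real d"
    proof -
      have "k * (d choose k) = d * ((d - 1) choose (k - 1))"
        by (rule times_binomial_minus1_eq) (use assms in auto)
      hence "real k * real (d choose k) = real d * real ((d - 1) choose (k - 1))"
        by (metis of_nat_mult)
      moreover have "(d choose k) > 0" using assms by simp
      moreover have "d > 0" using assms by simp
      ultimately show ?thesis by (simp add: field_simps)
    qed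
    finally show ?thesis .
  qed
  show ?thesis
  proof (rule pmf_eqI)
    fix b :: bool
    show "pmf (map_pmf (\<lambda>A. j \<in> A) (pmf_of_set (ksubsets d k))) b = pmf (bernoulli_pmf (real k / real d)) b"
      by (cases b) (use T p in \<open>simp_all add: pmf_False_conv_True[of "map_pmf _ _"]\<close>)
  qed
qed

lemma subsets_map:
  assumes "1 \<le> k" "k \<le> d" "j < d"
  shows "map_pmf (\<lambda>S i. j \<in> S i) (subsets_pmf n d k) = Pi_pmf {..<n} False (\<lambda>_. bernoulli_pmf (real k / real d))"
proof -
  have "Pi_pmf {..<n} False (\<lambda>_. map_pmf (\<lambda>A. j \<in> A) (pmf_of_set (ksubsets d k)))
      = map_pmf (\<lambda>h. (\<lambda>A. j \<in> A) \<circ> h) (Pi_pmf {..<n} {} (\<lambda>_. pmf_of_set (ksubsets d k)))"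
    by (rule Pi_pmf_map) auto
  thus ?thesis using bern_marg[OF assms] by (simp add: subsets_pmf_def comp_def)
qed



theorem theorem1:
  fixes n d k :: nat and T :: "nat \<Rightarrow> real" and x :: "nat \<Rightarrow> nat \<Rightarrow> real"
  assumes "n \<ge> 1" and "1 \<le> k" and "k \<le> d"
    and "\<And>m. m \<in> {1..n} \<Longrightarrow> T m \<noteq> 0"
    and "(\<Sum>m=1..n. real k / (real d * T m) * real ((n-1) choose (m-1))
       * (real k / real d) ^ (m-1) * (1 - real k / real d) ^ (n-m)) \<noteq> 0"
  shows "measure_pmf.expectation (subsets_pmf n d k)
           (\<lambda>S. \<Sum>j<d. (xhat n d k T x S j - xbar n x j)^2)
         = 1 / (real n)^2 * (real d / real k - 1) * R1 n d x
           + 1 / (real n)^2 * (c1 n d k T * R1 n d x - c2 n d k T * R2 n d x)"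
proof -
  define p where "p = real k / real d"
  have p: "0 < p" "p \<le> 1" using assms by (auto simp: p_def)
  define S1 where "S1 = (\<Sum>m\<le>n - 1. real ((n - 1) choose m) * p ^ m * (1 - p) ^ (n - 1 - m) * (1 / T (Suc m)))"
  define S2 where "S2 = (\<Sum>m\<le>n - 1. real ((n - 1) choose m) * p ^ m * (1 - p) ^ (n - 1 - m) * (1 / T (Suc m)^2))"
  define S3 where "S3 = (\<Sum>m\<le>n - 2. real ((n - 2) choose m) * p ^ m * (1 - p) ^ (n - 2 - m) * (1 / T (Suc (Suc m))^2))"
  define \<beta> where "\<beta> = beta_bar n d k T"
  define c where "c = \<beta> / real n"
  define W where "W = (\<lambda>j. \<Sum>i<n. x i j)"
  define Q where "Q = (\<lambda>j. \<Sum>i<n. (x i j)^2)"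
  have nsuc: "n = Suc (n - 1)" using assms by simp
  have shift1: "(\<Sum>m=1..n. F m) = (\<Sum>m\<le>n - 1. F (Suc m))" for F :: "nat \<Rightarrow> real"
  proof -
    have "(\<Sum>m=1..n. F m) = (\<Sum>m=Suc 0..Suc (n - 1). F m)" using nsuc by simp
    also have "\<dots> = (\<Sum>m=0..n - 1. F (Suc m))" by (rule sum.shift_bounds_cl_Suc_ivl)
    finally show ?thesis by (simp add: atLeast0AtMost)
  qed
  have bsum: "(\<Sum>m=1..n. real k / (real d * T m) * real ((n-1) choose (m-1))
       * (real k / real d) ^ (m-1) * (1 - real k / real d) ^ (n-m)) = p * S1"
    unfolding shift1 S1_def p_def[symmetric] sum_distrib_left
    by (intro sum.cong refl) (simp add: p_def field_simps)
  have bS1: "\<beta> * (p * S1) = 1"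
    using assms(5) unfolding \<beta>_def beta_bar_def bsum by (simp add: field_simps)
  have c1eq: "c1 n d k T = \<beta>^2 * (p * S2) - real d / real k"
  proof -
    have "(\<Sum>m=1..n. real k / (real d * (T m)^2)
       * real ((n-1) choose (m-1)) * (real k / real d) ^ (m-1) * (1 - real k / real d) ^ (n-m)) = p * S2"
      unfolding shift1 S2_def p_def[symmetric] sum_distrib_left
      by (intro sum.cong refl) (simp add: p_def field_simps)
    thus ?thesis unfolding c1_def \<beta>_def by simp
  qed
  have c2eq: "n \<ge> 2 \<Longrightarrow> c2 n d k T = 1 - \<beta>^2 * (p^2 * S3)"
  proof -
    assume n2: "n \<ge> 2"
    have "(\<Sum>m=2..n. (real k)^2 / ((real d)^2 * (T m)^2)
       * real ((n-2) choose (m-2)) * (real k / real d) ^ (m-2) * (1 - real k / real d) ^ (n-m)) = p^2 * S3"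
    proof -
      have n2': "n = Suc (Suc (n - 2))" using n2 by simp
      have "(\<Sum>m=2..n. (real k)^2 / ((real d)^2 * (T m)^2)
       * real ((n-2) choose (m-2)) * (real k / real d) ^ (m-2) * (1 - real k / real d) ^ (n-m))
        = (\<Sum>m=Suc (Suc 0)..Suc (Suc (n - 2)). (real k)^2 / ((real d)^2 * (T m)^2)
       * real ((n-2) choose (m-2)) * (real k / real d) ^ (m-2) * (1 - real k / real d) ^ (n-m))"
        using n2' by (simp add: numeral_2_eq_2)
      also have "\<dots> = (\<Sum>m=0..n - 2. (real k)^2 / ((real d)^2 * (T (Suc (Suc m)))^2)
       * real ((n-2) choose m) * (real k / real d) ^ m * (1 - real k / real d) ^ (n - 2 - m))"
        unfolding sum.shift_bounds_cl_Suc_ivl by simp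
      also have "\<dots> = p^2 * S3"
        unfolding S3_def p_def[symmetric] sum_distrib_left atLeast0AtMost
        by (intro sum.cong refl) (simp add: p_def field_simps)
      finally show ?thesis .
    qed
    thus ?thesis unfolding c2_def \<beta>_def by simp
  qed
  have fin: "finite (set_pmf (subsets_pmf n d k))"
    unfolding subsets_pmf_def by (subst set_Pi_pmf) (auto simp: ksub_finite ksub_nonempty assms)
  have xb: "xbar n x j = W j / real n" for j unfolding xbar_def W_def by simp
  have cpS1: "c * p * S1 = 1 / real n" unfolding c_def using bS1 assms(1) by (simp add: field_simps)
  have coordj: "measure_pmf.expectation (subsets_pmf n d k) (\<lambda>S. (xhat n d k T x S j - xbar n x j)^2)
     = c^2 * p^2 * S3 * (W j)^2 + c^2 * (p * S2 - p^2 * S3) * Q j - (W j)^2 / (real n)^2" if j: "j < d" for j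
  proof -
    define G where "G = (\<lambda>f. ((\<Sum>i<n. if f i then c * x i j / T (card {i\<in>{..<n}. f i}) else 0) - xbar n x j)^2)"
    have xh: "xhat n d k T x S j = (\<Sum>i<n. if j \<in> S i then c * x i j / T (card {i\<in>{..<n}. j \<in> S i}) else 0)" for S
    proof (cases "card {i\<in>{..<n}. j \<in> S i} \<ge> 1")
      case True
      hence "xhat n d k T x S j = (1 / real n) * (\<beta> / T (card {i\<in>{..<n}. j \<in> S i})) * (\<Sum>i<n. hval x S i j)"
        unfolding xhat_def Mcount_def \<beta>_def by simp
      also have "\<dots> = (\<Sum>i<n. if j \<in> S i then c * x i j / T (card {i\<in>{..<n}. j \<in> S i}) else 0)"
        unfolding sum_distrib_left c_def hval_def by (intro sum.cong refl) auto
      finally show ?thesis .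
    next
      case False
      hence "card {i\<in>{..<n}. j \<in> S i} = 0" by linarith
      hence "{i\<in>{..<n}. j \<in> S i} = {}" by (subst (asm) card_eq_0_iff) auto
      hence "\<forall>i<n. j \<notin> S i" by auto
      thus ?thesis using False unfolding xhat_def Mcount_def by simp
    qed
    have "measure_pmf.expectation (subsets_pmf n d k) (\<lambda>S. (xhat n d k T x S j - xbar n x j)^2)
        = measure_pmf.expectation (subsets_pmf n d k) (\<lambda>S. G (\<lambda>i. j \<in> S i))"
      unfolding G_def xh by simp
    also have "\<dots> = measure_pmf.expectation (map_pmf (\<lambda>S i. j \<in> S i) (subsets_pmf n d k)) G"
      by simp
    also have "\<dots> = measure_pmf.expectation (Pi_pmf {..<n} False (\<lambda>_. bernoulli_pmf p)) G"
      unfolding subsets_map[OF assms(2,3) j] p_def ..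
    also have "\<dots> = c^2 * p^2 * S3 * (W j)^2 + c^2 * (p * S2 - p^2 * S3) * Q j
     - 2 * xbar n x j * c * p * S1 * W j + (xbar n x j)^2"
      unfolding G_def S1_def S2_def S3_def W_def Q_def
      by (rule coord) (use p in auto)
    also have "\<dots> = c^2 * p^2 * S3 * (W j)^2 + c^2 * (p * S2 - p^2 * S3) * Q j - (W j)^2 / (real n)^2"
    proof -
      have "2 * xbar n x j * c * p * S1 * W j = 2 * (W j)^2 / (real n)^2"
      proof -
        have "2 * xbar n x j * c * p * S1 * W j = 2 * (W j / real n) * W j * (c * p * S1)"
          unfolding xb by (simp add: mult_ac)
        also have "\<dots> = 2 * (W j)^2 / (real n)^2" unfolding cpS1 by (simp add: power2_eq_square)
        finally show ?thesis .
      qed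
      thus ?thesis unfolding xb by (simp add: power_divide)
    qed
    finally show ?thesis .
  qed
  have "measure_pmf.expectation (subsets_pmf n d k) (\<lambda>S. \<Sum>j<d. (xhat n d k T x S j - xbar n x j)^2)
     = (\<Sum>j<d. measure_pmf.expectation (subsets_pmf n d k) (\<lambda>S. (xhat n d k T x S j - xbar n x j)^2))"
    by (rule Bochner_Integration.integral_sum) (rule integrable_measure_pmf_finite[OF fin])
  also have "\<dots> = (\<Sum>j<d. c^2 * p^2 * S3 * (W j)^2 + c^2 * (p * S2 - p^2 * S3) * Q j - (W j)^2 / (real n)^2)"
    by (intro sum.cong refl) (simp add: coordj)
  also have "\<dots> = c^2 * p^2 * S3 * (\<Sum>j<d. (W j)^2) + c^2 * (p * S2 - p^2 * S3) * (\<Sum>j<d. Q j) - (\<Sum>j<d. (W j)^2) / (real n)^2"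
    by (simp add: sum.distrib sum_subtractf sum_distrib_left sum_divide_distrib)
  also have "(\<Sum>j<d. Q j) = R1 n d x" unfolding Q_def R1_def by (rule sum.swap)
  also have "(\<Sum>j<d. (W j)^2) = R1 n d x + R2 n d x"
  proof -
    have "(\<Sum>j<d. (W j)^2) = (\<Sum>j<d. (\<Sum>i<n. (x i j)^2) + 2 * (\<Sum>i<n. \<Sum>l\<in>{i+1..<n}. x i j * x l j))"
      unfolding W_def by (simp add: sq_sum)
    also have "\<dots> = (\<Sum>j<d. \<Sum>i<n. (x i j)^2) + 2 * (\<Sum>j<d. \<Sum>i<n. \<Sum>l\<in>{i+1..<n}. x i j * x l j)"
      by (simp add: sum.distrib sum_distrib_left)
    also have "(\<Sum>j<d. \<Sum>i<n. (x i j)^2) = R1 n d x" unfolding R1_def by (rule sum.swap)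
    also have "(\<Sum>j<d. \<Sum>i<n. \<Sum>l\<in>{i+1..<n}. x i j * x l j) = (\<Sum>i<n. \<Sum>l\<in>{i+1..<n}. \<Sum>j<d. x i j * x l j)"
      by (subst sum.swap) (simp add: sum.swap[of _ "{..<d}"])
    finally show ?thesis unfolding R2_def by simp
  qed
  also have "c^2 * p^2 * S3 * (R1 n d x + R2 n d x) + c^2 * (p * S2 - p^2 * S3) * R1 n d x - (R1 n d x + R2 n d x) / (real n)^2
     = 1 / (real n)^2 * (real d / real k - 1) * R1 n d x
           + 1 / (real n)^2 * (c1 n d k T * R1 n d x - c2 n d k T * R2 n d x)"
  proof (cases "n \<ge> 2")
    case True
    show ?thesis unfolding c1eq c2eq[OF True] c_def using assms(1)
      by (simp add: field_simps power2_eq_square)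
  next
    case False
    hence "n = 1" using assms(1) by simp
    hence R2: "R2 n d x = 0" unfolding R2_def by simp
    show ?thesis unfolding c1eq R2 c_def using assms(1)
      by (simp add: field_simps power2_eq_square)
  qed
  finally show ?thesis .
qed

end
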